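(* (i) For every $\epsilon\in\mathbb{C}$ and every $k\in\mathbb{N}_0$, $E_{2k+1}^{(2\epsilon)}(\epsilon)=0$. (ii) For every real number $r$, the Maclaurin expansion of $(\cos z)^r$ about $z=0$ is \[ (\cos z)^r=\sum_{k=0}^{\infty}(-1)^kE_{2k}^{(-r)}\biggl(-\frac{r}{2}\biggr)\frac{(2z)^{2k}}{(2k)!}. \]
   Context: For $\sigma\in\mathbb{C}$, the generalized Euler polynomials $E_k^{(\sigma)}(x)$ are defined by the generating function $\bigl(\frac{2}{e^z+1}\bigr)^\sigma e^{xz}=\sum_{k=0}^{\infty}E_k^{(\sigma)}(x)\frac{z^k}{k!}$ for $|z|<\pi$, where the power is the branch equal to $1$ at $z=0$. Likewise $(\cos z)^r$ denotes the branch that equals $1$ at $z=0$ (analytic near $0$). *)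

theory Defs
  imports "HOL-Analysis.Analysis"
begin

text \<open>The power is taken with the principal logarithm
  (complex powr), which near z = 0 coincides with the branch equal to 1 at z = 0;
  the coefficients only depend on the germ at 0.\<close>
definition euler_gf :: "complex \<Rightarrow> complex \<Rightarrow> complex \<Rightarrow> complex" where
  "euler_gf \<sigma> x z = (2 / (exp z + 1)) powr \<sigma> * exp (x * z)"

text \<open>E_k^{(sigma)}(x) = k-th derivative at 0 of the generating function,
  i.e. k! times its k-th Maclaurin coefficient.\<close>
definition gen_euler_poly :: "nat \<Rightarrow> complex \<Rightarrow> complex \<Rightarrow> complex" where
  "gen_euler_poly k \<sigma> x = (deriv ^^ k) (euler_gf \<sigma> x) 0"

end

theory Submission
  imports Defs "HOL-Complex_Analysis.Complex_Analysis"
begin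

lemma Ln_mult_Re_pos:
  fixes a b :: complex
  assumes "Re a > 0" "Re b > 0"
  shows "Ln (a * b) = Ln a + Ln b"
proof -
  have "a \<noteq> 0" "b \<noteq> 0" using assms by auto
  moreover have "\<bar>Im (Ln a)\<bar> < pi/2" "\<bar>Im (Ln b)\<bar> < pi/2"
    using assms Re_Ln_pos_lt_imp by auto
  ultimately show ?thesis by (subst Ln_times) auto
qed

lemma Re_exp_pos:
  fixes z :: complex
  assumes "\<bar>Im z\<bar> < 1"
  shows "Re (exp z) > 0"
proof -
  have "cos (Im z) > 0" using assms pi_gt3 by (intro cos_gt_zero_pi) auto
  then show ?thesis by (simp add: Re_exp)
qed

lemma Re_inverse_pos:
  fixes a :: complex
  assumes "Re a > 0"
  shows "Re (inverse a) > 0"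
proof -
  have "a \<noteq> 0" using assms by auto
  have "(Re a)^2 + (Im a)^2 > 0" using assms by (simp add: add_pos_nonneg)
  then show ?thesis using assms by (simp add: Re_inverse)
qed

lemma u_props:
  fixes z :: complex
  assumes "\<bar>Im z\<bar> < 1"
  shows "Re (2 / (exp z + 1)) > 0" "exp z + 1 \<noteq> 0"
proof -
  have r: "Re (exp z + 1) > 0" using Re_exp_pos[OF assms] by simp
  then show "exp z + 1 \<noteq> 0" by (metis less_irrefl zero_complex.sel(1))
  have "Re (inverse (exp z + 1)) > 0" by (rule Re_inverse_pos[OF r])
  then show "Re (2 / (exp z + 1)) > 0" by (simp add: divide_inverse)
qed

lemma euler_gf_eq:
  fixes z :: complex
  assumes "\<bar>Im z\<bar> < 1"
  shows "euler_gf \<sigma> x z = exp (\<sigma> * Ln (2 / (exp z + 1))) * exp (x * z)"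
proof -
  have "2 / (exp z + 1) \<noteq> 0" using u_props[OF assms] by auto
  then show ?thesis by (simp add: euler_gf_def powr_def)
qed

lemma euler_gf_holo: "euler_gf \<sigma> x holomorphic_on ball 0 1"
proof -
  have im: "\<bar>Im z\<bar> < 1" if "z \<in> ball 0 1" for z :: complex
    using that abs_Im_le_cmod[of z] by auto
  show ?thesis unfolding euler_gf_def
    using u_props[OF im]
    by (intro holomorphic_intros holomorphic_on_powr) (fastforce simp: complex_nonpos_Reals_iff)+
qed


lemma ball_Im: "z \<in> ball (0::complex) 1 \<Longrightarrow> \<bar>Im z\<bar> < 1"
  using abs_Im_le_cmod[of z] by auto

lemma euler_gf_even:
  fixes z \<epsilon> :: complex
  assumes "z \<in> ball 0 1"
  shows "euler_gf (2*\<epsilon>) \<epsilon> ((-1) * z) = euler_gf (2*\<epsilon>) \<epsilon> z"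
proof -
  have im: "\<bar>Im z\<bar> < 1" using ball_Im[OF assms] .
  have im': "\<bar>Im (-z)\<bar> < 1" using im by simp
  define u where "u = 2 / (exp z + 1)"
  have upos: "Re u > 0" and nz: "exp z + 1 \<noteq> 0" using u_props[OF im] by (auto simp: u_def)
  have "2 / (exp (-z) + 1) = u * exp z"
    using nz by (simp add: u_def exp_minus field_simps)
  then have "Ln (2 / (exp (-z) + 1)) = Ln u + z"
    using Ln_mult_Re_pos[OF upos Re_exp_pos[OF im]] im pi_gt3 by simp
  then have "euler_gf (2*\<epsilon>) \<epsilon> ((-1) * z) = exp (2*\<epsilon>*(Ln u + z)) * exp (\<epsilon> * (-z))"
    using euler_gf_eq[OF im'] by simp
  also have "\<dots> = exp (2*\<epsilon>*Ln u) * exp (\<epsilon> * z)"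
    by (simp add: exp_add[symmetric] algebra_simps)
  also have "\<dots> = euler_gf (2*\<epsilon>) \<epsilon> z"
    using euler_gf_eq[OF im] by (simp add: u_def)
  finally show ?thesis .
qed

lemma part1: "gen_euler_poly (2*k+1) (2*\<epsilon>) \<epsilon> = 0"
proof -
  let ?f = "euler_gf (2*\<epsilon>) \<epsilon>"
  have ev: "eventually (\<lambda>w. ?f w = ?f ((-1) * w)) (nhds 0)"
    using eventually_nhds_in_open[of "ball (0::complex) 1" 0] euler_gf_even
    by (auto elim!: eventually_mono)
  have "(deriv ^^ (2*k+1)) ?f 0 = (deriv ^^ (2*k+1)) (\<lambda>w. ?f ((-1) * w)) 0"
    by (rule higher_deriv_cong_ev[OF ev refl])
  also have "\<dots> = (-1)^(2*k+1) * (deriv ^^ (2*k+1)) ?f ((-1) * 0)"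
    by (rule higher_deriv_compose_linear[OF euler_gf_holo, of "ball 0 1"]) auto
  finally have "(deriv ^^ (2*k+1)) ?f 0 = - (deriv ^^ (2*k+1)) ?f 0" by simp
  then show ?thesis unfolding gen_euler_poly_def by simp
qed

lemma cos_identity:
  fixes z :: complex and r :: real
  assumes "cmod z < 1/2"
  shows "euler_gf (- of_real r) (- of_real r / 2) (2 * \<i> * z) = cos z powr of_real r"
proof -
  define w where "w = 2 * \<i> * z"
  have im: "\<bar>Im w\<bar> < 1" using abs_Re_le_cmod[of z] assms by (simp add: w_def)
  have im2: "\<bar>Im (-w/2)\<bar> < 1" using im by simp
  define u where "u = 2 / (exp w + 1)"
  have upos: "Re u > 0" and nz: "exp w + 1 \<noteq> 0" using u_props[OF im] by (auto simp: u_def)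
  have unz: "u \<noteq> 0" using upos by auto
  have "cos z = (exp (\<i> * z) + exp (-(\<i> * z))) / 2" by (rule cos_exp_eq)
  also have "\<dots> = inverse u * exp (-w/2)"
  proof -
    have "exp w * exp (-w/2) = exp (\<i> * z)"
      by (simp add: exp_add[symmetric] w_def)
    moreover have "exp (-w/2) = exp (-(\<i> * z))" by (simp add: w_def)
    ultimately show ?thesis
      by (simp add: u_def field_simps)
  qed
  finally have c: "cos z = inverse u * exp (-w/2)" .
  have cnz: "cos z \<noteq> 0" using c unz by simp
  have "u \<notin> \<real>\<^sub>\<le>\<^sub>0" using upos by (auto simp: complex_nonpos_Reals_iff)
  then have "Ln (cos z) = - Ln u + (-w/2)"
    using c Ln_mult_Re_pos[OF Re_inverse_pos[OF upos] Re_exp_pos[OF im2]] Ln_inverse im2 pi_gt3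
    by simp
  then have "cos z powr of_real r = exp (of_real r * (- Ln u + (-w/2)))"
    using cnz by (simp add: powr_def)
  also have "\<dots> = exp (- of_real r * Ln u) * exp (- of_real r / 2 * w)"
    by (simp add: exp_add[symmetric] algebra_simps)
  also have "\<dots> = euler_gf (- of_real r) (- of_real r / 2) w"
    using euler_gf_eq[OF im] by (simp add: u_def)
  finally show ?thesis by (simp add: w_def)
qed


lemma part2:
  fixes r :: real and z :: complex
  assumes "norm z < 1/2"
  shows "(\<lambda>k. (-1)^k * gen_euler_poly (2*k) (- of_real r) (- of_real r / 2)
                   * (2*z)^(2*k) / fact (2*k)) sums (cos z powr of_real r)"
proof -
  let ?g = "euler_gf (- of_real r) (- of_real r / 2)"
  define t where "t n = (deriv ^^ n) ?g 0 / fact n * (2 * \<i> * z - 0)^n" for n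
  have "2 * \<i> * z \<in> ball 0 1" using assms by (simp add: norm_mult)
  then have gs: "t sums ?g (2 * \<i> * z)" unfolding t_def
    by (rule holomorphic_power_series[OF euler_gf_holo])
  have eq: "?g (2 * \<i> * z) = cos z powr of_real r" by (rule cos_identity[OF assms])
  have "(\<lambda>n. sum t {n * 2 ..< n * 2 + 2}) sums ?g (2 * \<i> * z)"
    by (rule sums_group[OF gs]) simp
  then have "(\<lambda>n. sum t {n * 2 ..< n * 2 + 2}) sums (cos z powr of_real r)"
    by (simp only: eq)
  moreover have "sum t {n * 2 ..< n * 2 + 2} = (-1)^n * gen_euler_poly (2*n) (- of_real r) (- of_real r / 2)
                   * (2*z)^(2*n) / fact (2*n)" for n
  proof -
    have odd: "t (2*n+1) = 0"
      using part1[of n "- of_real r / 2"] by (simp add: t_def gen_euler_poly_def)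
    have "(2 * \<i> * z)^(2*n) = (-1)^n * (2*z)^(2*n)"
      by (simp add: power_mult_distrib power_mult power_minus[of "4 * z\<^sup>2"])
    then have "t (2*n) = (-1)^n * gen_euler_poly (2*n) (- of_real r) (- of_real r / 2)
                   * (2*z)^(2*n) / fact (2*n)"
      by (simp add: t_def gen_euler_poly_def)
    moreover have "{n * 2 ..< n * 2 + 2} = {2*n, 2*n+1}" by auto
    ultimately show ?thesis using odd by simp
  qed
  ultimately show ?thesis by simp
qed

theorem mainTheorem3:
  shows "(\<forall>(\<epsilon>::complex) (k::nat). gen_euler_poly (2*k+1) (2*\<epsilon>) \<epsilon> = 0) \<and>
         (\<forall>r::real. \<exists>\<delta>>0. \<forall>z::complex. norm z < \<delta> \<longrightarrow>
            (\<lambda>k. (-1)^k * gen_euler_poly (2*k) (- of_real r) (- of_real r / 2)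
                   * (2*z)^(2*k) / fact (2*k)) sums (cos z powr of_real r))"
proof (intro conjI allI)
  fix r :: real
  show "\<exists>\<delta>>0. \<forall>z::complex. norm z < \<delta> \<longrightarrow>
            (\<lambda>k. (-1)^k * gen_euler_poly (2*k) (- of_real r) (- of_real r / 2)
                   * (2*z)^(2*k) / fact (2*k)) sums (cos z powr of_real r)"
    by (intro exI[of _ "1/2"] conjI allI impI part2) simp_all
qed (rule part1)

end
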